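(* Let $p\in(0,1]$, let $\Omega\subset\mathbb R^n$ be open, and let $B$ be a ball with centre in $\Omega$ such that $4B\cap\partial\Omega\neq\emptyset$. If $f:\Omega\to\mathbb R$ is supported in $B\cap\Omega$ and $\|f\|_{L^\infty}\le C_0|B|^{-1/p}$, then $\|f\|_{H^p_{Mi}(\Omega)}\le C$, where $C$ depends only on $C_0$, $n$ and $p$.
   Context: $\lambda B$ denotes the ball with the same centre as $B$ and $\lambda$ times its radius; $|\cdot|$ is Lebesgue measure. Miyachi Hardy space: for $p\in(0,1]$, an $H^p_{Mi}(\Omega)$-atom is a bounded measurable $a:\Omega\to\mathbb R$ supported in a ball $B\subset\Omega$ with $\|a\|_{L^\infty}\le|B|^{-1/p}$ and such that either $2B\subset\Omega$ and $4B\cap\partial\Omega\ne\emptyset$, or $4B\subset\Omega$ and $\int x^\alpha a(x)\,dx=0$ for all multi-indices $|\alpha|\le[n(1/p-1)]$. $H^p_{Mi}(\Omega)$ is the set of distributions $f=\sum_j\lambda_ja_j$ with such atoms and $\sum|\lambda_j|^p<\infty$, with $\|f\|^p_{H^p_{Mi}}=\inf\sum_j|\lambda_j|^p$ over all such decompositions. *)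

theory Defs
  imports "HOL-Analysis.Analysis"
begin

fun Ck :: "nat \<Rightarrow> ('a::euclidean_space \<Rightarrow> real) \<Rightarrow> bool" where
  "Ck 0 f = continuous_on UNIV f"
| "Ck (Suc k) f = (continuous_on UNIV f \<and> f differentiable_on UNIV \<and>
      (\<forall>v. Ck k (\<lambda>x. frechet_derivative f (at x) v)))"

definition smooth :: "('a::euclidean_space \<Rightarrow> real) \<Rightarrow> bool" where
  "smooth f \<longleftrightarrow> (\<forall>k. Ck k f)"

(* test functions C_c^\<infinity>(\<Omega>), extended by zero to the whole space *)
definition test_function :: "'a::euclidean_space set \<Rightarrow> ('a \<Rightarrow> real) \<Rightarrow> bool" where
  "test_function \<Omega> \<phi> \<longleftrightarrow> smooth \<phi> \<and> compact (closure {x. \<phi> x \<noteq> 0})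
      \<and> closure {x. \<phi> x \<noteq> 0} \<subseteq> \<Omega>"

definition monomial :: "('a::euclidean_space \<Rightarrow> nat) \<Rightarrow> 'a \<Rightarrow> real" where
  "monomial \<alpha> x = (\<Prod>i\<in>Basis. (x \<bullet> i) ^ (\<alpha> i))"

definition mi_order :: "('a::euclidean_space \<Rightarrow> nat) \<Rightarrow> nat" where
  "mi_order \<alpha> = (\<Sum>i\<in>Basis. \<alpha> i)"

definition HpMi_atom :: "real \<Rightarrow> 'a::euclidean_space set \<Rightarrow> ('a \<Rightarrow> real) \<Rightarrow> bool" where
  "HpMi_atom p \<Omega> a \<longleftrightarrow> (\<exists>c r. r > 0 \<and> ball c r \<subseteq> \<Omega> \<and>
      set_borel_measurable lebesgue \<Omega> a \<and>
      (\<forall>x. x \<notin> ball c r \<longrightarrow> a x = 0) \<and>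
      (\<exists>M. \<forall>x. \<bar>a x\<bar> \<le> M) \<and>
      (AE x in lebesgue. x \<in> \<Omega> \<longrightarrow> \<bar>a x\<bar> \<le> measure lebesgue (ball c r) powr (-1/p)) \<and>
      ((ball c (2*r) \<subseteq> \<Omega> \<and> ball c (4*r) \<inter> frontier \<Omega> \<noteq> {}) \<or>
       (ball c (4*r) \<subseteq> \<Omega> \<and>
        (\<forall>\<alpha>. mi_order \<alpha> \<le> nat \<lfloor>real DIM('a) * (1/p - 1)\<rfloor> \<longrightarrow>
              (LINT x:\<Omega>|lebesgue. monomial \<alpha> x * a x) = 0))))"

(* f = \<Sum>_j \<lambda>_j a_j in the sense of distributions on \<Omega>, with atoms a_j *)
definition HpMi_decomp :: "real \<Rightarrow> 'a::euclidean_space set \<Rightarrow> ('a \<Rightarrow> real)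
      \<Rightarrow> (nat \<Rightarrow> real) \<Rightarrow> (nat \<Rightarrow> 'a \<Rightarrow> real) \<Rightarrow> bool" where
  "HpMi_decomp p \<Omega> f lam a \<longleftrightarrow> (\<forall>j. HpMi_atom p \<Omega> (a j)) \<and>
      summable (\<lambda>j. \<bar>lam j\<bar> powr p) \<and>
      (\<forall>\<phi>. test_function \<Omega> \<phi> \<longrightarrow>
         (\<lambda>j. lam j * (LINT x:\<Omega>|lebesgue. a j x * \<phi> x)) sums (LINT x:\<Omega>|lebesgue. f x * \<phi> x))"

definition HpMi_norm :: "real \<Rightarrow> 'a::euclidean_space set \<Rightarrow> ('a \<Rightarrow> real) \<Rightarrow> ennreal" where
  "HpMi_norm p \<Omega> f =
     (let S = {(\<Sum>j. \<bar>lam j\<bar> powr p) | lam a. HpMi_decomp p \<Omega> f lam a}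
      in if S = {} then \<infinity> else ennreal ((Inf S) powr (1/p)))"

end

theory Submission
  imports Defs
begin

lemma geom:
  fixes \<Omega> :: "'a::euclidean_space set"
  assumes "open \<Omega>" "x \<in> \<Omega>" "frontier \<Omega> \<noteq> {}"
  shows "0 < infdist x (frontier \<Omega>)" "ball x (infdist x (frontier \<Omega>)) \<subseteq> \<Omega>"
    "\<exists>y\<in>frontier \<Omega>. dist x y < 2 * infdist x (frontier \<Omega>)"
proof -
  have "x \<notin> frontier \<Omega>" using assms by (simp add: frontier_def interior_open)
  then show pos: "0 < infdist x (frontier \<Omega>)"
    using infdist_pos_not_in_closed[of "frontier \<Omega>" x] assms(3) by auto
  show "ball x (infdist x (frontier \<Omega>)) \<subseteq> \<Omega>"
  proof
    fix z assume z: "z \<in> ball x (infdist x (frontier \<Omega>))"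
    show "z \<in> \<Omega>"
    proof (rule ccontr)
      assume "z \<notin> \<Omega>"
      then have h1: "ball x (infdist x (frontier \<Omega>)) - \<Omega> \<noteq> {}" using z by blast
      have h2: "ball x (infdist x (frontier \<Omega>)) \<inter> \<Omega> \<noteq> {}" using assms(2) pos centre_in_ball by blast
      have "ball x (infdist x (frontier \<Omega>)) \<inter> frontier \<Omega> \<noteq> {}"
        by (rule connected_Int_frontier[OF connected_ball h2 h1])
      then obtain w where "w \<in> frontier \<Omega>" "dist x w < infdist x (frontier \<Omega>)" by auto
      then show False using infdist_le[of w "frontier \<Omega>" x] by auto
    qed
  qed
  have "infdist x (frontier \<Omega>) < 2 * infdist x (frontier \<Omega>)" using pos by simp
  then show "\<exists>y\<in>frontier \<Omega>. dist x y < 2 * infdist x (frontier \<Omega>)"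
    using assms(3) by (simp add: infdist_notempty cINF_less_iff)
qed

lemma mball: "0 \<le> \<rho> \<Longrightarrow> measure lebesgue (ball (x::'a::euclidean_space) \<rho>) = unit_ball_vol (DIM('a)) * \<rho> ^ DIM('a)"
  by (simp add: content_ball)

lemma ball_fin: "emeasure lebesgue (ball (x::'a::euclidean_space) \<rho>) \<noteq> \<infinity>"
  "ball x \<rho> \<in> sets lebesgue" "emeasure lebesgue (ball (x::'a::euclidean_space) \<rho>) \<noteq> top"
  using lmeasurable_ball[of x \<rho>] unfolding fmeasurable_def by auto

lemma selectA:
  fixes \<Omega> :: "'a::euclidean_space set"
  assumes d_def: "d = (\<lambda>x. infdist x (frontier \<Omega>))"
  assumes "open \<Omega>" "c \<in> \<Omega>" "r > 0" "ball c (4*r) \<inter> frontier \<Omega> \<noteq> {}"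
  obtains g :: "nat \<Rightarrow> 'a" where "\<And>j. g j \<in> \<Omega> \<inter> ball c r"
    "\<Omega> \<inter> ball c r \<subseteq> (\<Union>j. ball (g j) (d (g j) / 2))"
    "\<And>N. (\<Sum>x\<in>g`{..<N}. measure lebesgue (ball x (d x / 2))) \<le> 10 ^ DIM('a) * measure lebesgue (ball c r)"
proof -
  let ?K = "\<Omega> \<inter> ball c r"
  have fr: "frontier \<Omega> \<noteq> {}" using assms by blast
  obtain y0 where y0: "y0 \<in> frontier \<Omega>" "dist c y0 < 4*r" using assms(5) by auto
  have dpos: "0 < d x" if "x \<in> ?K" for x using geom(1)[OF assms(2) _ fr] that d_def by auto
  have dle: "d x < 5 * r" if "x \<in> ?K" for x
  proof -
    have "d x \<le> dist x y0" unfolding d_def by (rule infdist_le[OF y0(1)])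
    also have "\<dots> \<le> dist x c + dist c y0" by (rule dist_triangle)
    also have "\<dots> < 5 * r" using that y0(2) by (simp add: dist_commute)
    finally show ?thesis .
  qed
  have S: "?K \<subseteq> (\<Union>i\<in>?K. ball (id i) (d i / 10))" using dpos by force
  have rb: "\<And>i. i \<in> ?K \<Longrightarrow> 0 < d i / 10 \<and> d i / 10 \<le> r" using dpos dle by fastforce
  obtain C where C: "countable C" "C \<subseteq> ?K"
     "pairwise (\<lambda>i j. disjnt (ball (id i) (d i / 10)) (ball (id j) (d j / 10))) C"
     "?K \<subseteq> (\<Union>i\<in>C. ball (id i) (5 * (d i / 10)))"
    by (rule Vitali_covering_lemma_balls[OF S rb]) blast+
  have Cne: "C \<noteq> {}" using C(4) assms(3,4) by auto
  define g where "g = from_nat_into C"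
  have rg: "range g = C" using Cne C(1) by (simp add: g_def)
  show ?thesis
  proof
    show "g j \<in> ?K" for j using rg C(2) by blast
    show "?K \<subseteq> (\<Union>j. ball (g j) (d (g j) / 2))"
    proof
      fix x assume "x \<in> ?K"
      then obtain i where "i \<in> C" "x \<in> ball i (d i / 2)" using C(4) by auto
      moreover obtain j where "i = g j" using rg \<open>i \<in> C\<close> by auto
      ultimately show "x \<in> (\<Union>j. ball (g j) (d (g j) / 2))" by auto
    qed
    fix N
    let ?F = "g`{..<N}"
    have FC: "?F \<subseteq> C" using rg by auto
    have dj: "disjoint_family_on (\<lambda>x. ball x (d x / 10)) ?F"
      using C(3) FC unfolding disjoint_family_on_def pairwise_def disjnt_def by (simp add: subset_iff)
    have "(\<Sum>x\<in>?F. measure lebesgue (ball x (d x / 2))) = (\<Sum>x\<in>?F. 5 ^ DIM('a) * measure lebesgue (ball x (d x / 10)))"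
    proof (rule sum.cong[OF refl])
      fix x assume "x \<in> ?F"
      then have "0 < d x" using dpos FC C(2) by blast
      then have a: "measure lebesgue (ball x (d x / 2)) = unit_ball_vol (DIM('a)) * (d x / 2) ^ DIM('a)"
        and b: "measure lebesgue (ball x (d x / 10)) = unit_ball_vol (DIM('a)) * (d x / 10) ^ DIM('a)"
        using mball[of "d x / 2" x] mball[of "d x / 10" x] by auto
      have e: "d x / 2 = 5 * (d x / 10)" by simp
      show "measure lebesgue (ball x (d x / 2)) = 5 ^ DIM('a) * measure lebesgue (ball x (d x / 10))"
      proof -
        have "(d x / 2) ^ DIM('a) = (5 * (d x / 10)) ^ DIM('a)" by simp
        also have "\<dots> = 5 ^ DIM('a) * (d x / 10) ^ DIM('a)" by (rule power_mult_distrib)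
        finally show ?thesis unfolding a b by simp
      qed
    qed
    also have "\<dots> = 5 ^ DIM('a) * measure lebesgue (\<Union>x\<in>?F. ball x (d x / 10))"
      by (subst measure_finite_Union[OF _ _ dj]) (auto simp: sum_distrib_left ball_fin simp del: measure_completion emeasure_completion)
    also have "\<dots> \<le> 5 ^ DIM('a) * measure lebesgue (ball c (2 * r))"
    proof -
      have "(\<Union>x\<in>?F. ball x (d x / 10)) \<subseteq> ball c (2 * r)"
      proof
        fix z assume "z \<in> (\<Union>x\<in>?F. ball x (d x / 10))"
        then obtain x where x0: "x \<in> ?F" "dist x z < d x / 10" by auto
        have x: "x \<in> ?K" "dist x z < d x / 10" using x0 FC C(2) by blast+
        have "dist c z \<le> dist c x + dist x z" by (rule dist_triangle)
        also have "\<dots> < 2 * r" proof -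
          have "dist c x < r" using x(1) by auto
          then show ?thesis using x(2) dle[OF x(1)] assms(4) unfolding d_def by linarith
        qed
        finally show "z \<in> ball c (2 * r)" by simp
      qed
      then show ?thesis
        by (intro mult_left_mono measure_mono_fmeasurable) (auto simp del: measure_completion emeasure_completion)
    qed
    also have "\<dots> = 10 ^ DIM('a) * measure lebesgue (ball c r)"
    proof -
      have a: "measure lebesgue (ball c (2*r)) = unit_ball_vol (DIM('a)) * (2*r) ^ DIM('a)"
        and b: "measure lebesgue (ball c r) = unit_ball_vol (DIM('a)) * r ^ DIM('a)"
        using mball[of "2*r" c] mball[of r c] assms(4) by auto
      have "(5::real) ^ DIM('a) * 2 ^ DIM('a) = 10 ^ DIM('a)"
        by (simp add: power_mult_distrib[symmetric])
      then show ?thesis unfolding a b by (simp add: power_mult_distrib)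
    qed
    finally show "(\<Sum>x\<in>?F. measure lebesgue (ball x (d x / 2))) \<le> 10 ^ DIM('a) * measure lebesgue (ball c r)" .
  qed
qed

lemma cont_meas: "continuous_on UNIV (\<phi>::'a::euclidean_space\<Rightarrow>real) \<Longrightarrow> \<phi> \<in> borel_measurable lebesgue"
  by (intro measurable_completion) (simp add: borel_measurable_continuous_onI)

lemma open_leb: "open (S::'a::euclidean_space set) \<Longrightarrow> S \<in> sets lebesgue"
  by (rule sets_completionI_sets) (simp add: borel_open)

lemma test_bounded:
  fixes \<phi> :: "'a::euclidean_space \<Rightarrow> real"
  assumes "test_function \<Omega> \<phi>"
  shows "continuous_on UNIV \<phi>" "\<exists>P. \<forall>x. \<bar>\<phi> x\<bar> \<le> P"
proof -
  have "smooth \<phi>" using assms unfolding test_function_def by simp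
  then have "Ck 0 \<phi>" unfolding smooth_def by (rule spec)
  then show c: "continuous_on UNIV \<phi>" by simp
  let ?S = "closure {x. \<phi> x \<noteq> 0}"
  have "compact ?S" using assms unfolding test_function_def by blast
  then have "compact (\<phi> ` ?S)" by (rule compact_continuous_image[OF continuous_on_subset[OF c subset_UNIV]])
  then have "bounded (\<phi> ` ?S)" by (rule compact_imp_bounded)
  then obtain P where P: "\<And>y. y \<in> \<phi> ` ?S \<Longrightarrow> norm y \<le> P"
    unfolding bounded_iff by blast
  have "\<bar>\<phi> x\<bar> \<le> max P 0" for x
  proof (cases "x \<in> ?S")
    case True then show ?thesis using P[of "\<phi> x"] by auto
  next
    case False then have "\<phi> x = 0" using contra_subsetD[OF closure_subset False] by simp
    then show ?thesis by simp
  qed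
  then show "\<exists>P. \<forall>x. \<bar>\<phi> x\<bar> \<le> P" by blast
qed

lemma main:
  fixes \<Omega> :: "'a::euclidean_space set" and f :: "'a \<Rightarrow> real" and p C0 :: real
  assumes p: "0 < p" "p \<le> 1"
    and geo: "open \<Omega>" "c \<in> \<Omega>" "r > 0" "ball c (4*r) \<inter> frontier \<Omega> \<noteq> {}"
    and fm: "set_borel_measurable lebesgue \<Omega> f"
    and fs: "\<forall>x\<in>\<Omega>. x \<notin> ball c r \<longrightarrow> f x = 0"
    and fb: "AE x in lebesgue. x \<in> \<Omega> \<longrightarrow> \<bar>f x\<bar> \<le> C0 * measure lebesgue (ball c r) powr (-1/p)"
  shows "\<exists>lam a. HpMi_decomp p \<Omega> f lam a \<and> (\<Sum>j. \<bar>lam j\<bar> powr p) \<le> max C0 1 powr p * 10 ^ DIM('a)"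
proof -
  define d where "d = (\<lambda>x. infdist x (frontier \<Omega>))"
  obtain g :: "nat \<Rightarrow> 'a" where g1: "\<And>j. g j \<in> \<Omega> \<inter> ball c r"
      and g2: "\<Omega> \<inter> ball c r \<subseteq> (\<Union>j. ball (g j) (d (g j) / 2))"
      and g3: "\<And>N. (\<Sum>x\<in>g`{..<N}. measure lebesgue (ball x (d x / 2))) \<le> 10 ^ DIM('a) * measure lebesgue (ball c r)"
    by (rule selectA[OF d_def geo], rule that)
  have fr: "frontier \<Omega> \<noteq> {}" using geo(4) by blast
  have gO: "g j \<in> \<Omega>" for j using g1 by blast
  have dpos: "0 < d (g j)" for j using geom(1)[OF geo(1) gO fr] by (simp add: d_def)
  have dsub: "ball (g j) (d (g j)) \<subseteq> \<Omega>" for j using geom(2)[OF geo(1) gO fr] by (simp add: d_def)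
  have dfr: "ball (g j) (2 * d (g j)) \<inter> frontier \<Omega> \<noteq> {}" for j
  proof -
    obtain y where "y \<in> frontier \<Omega>" "dist (g j) y < 2 * d (g j)"
      using geom(3)[OF geo(1) gO fr] unfolding d_def by blast
    then show ?thesis by auto
  qed
  define \<mu>B where "\<mu>B = measure lebesgue (ball c r)"
  have \<mu>Bpos: "\<mu>B > 0" using geo(3) by (simp add: \<mu>B_def mball)
  define L where "L = \<mu>B powr (-1/p)"
  have Lpos: "L > 0" using \<mu>Bpos by (simp add: L_def)
  define M0 where "M0 = max C0 1"
  have M0pos: "M0 > 0" by (simp add: M0_def)
  define t where "t = C0 * L"
  define F where "F = (\<lambda>x. indicator \<Omega> x * f x)"
  define G where "G = (\<lambda>x. if \<bar>F x\<bar> \<le> t then F x else (0::real))"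
  have Fm[measurable]: "F \<in> borel_measurable lebesgue"
    using fm unfolding set_borel_measurable_def F_def by simp
  have Gm[measurable]: "G \<in> borel_measurable lebesgue" unfolding G_def by measurable
  have Gb: "\<bar>G x\<bar> \<le> M0 * L" for x
  proof -
    have "t \<le> M0 * L" unfolding t_def M0_def using Lpos by (intro mult_right_mono) auto
    then show ?thesis unfolding G_def using M0pos Lpos by auto
  qed
  have G0: "x \<notin> \<Omega> \<Longrightarrow> G x = 0" for x by (simp add: G_def F_def)
  define B where "B = (\<lambda>j. ball (g j) (d (g j) / 2))"
  define \<mu> where "\<mu> = (\<lambda>j. measure lebesgue (B j))"
  have \<mu>pos: "\<mu> j > 0" for j using dpos[of j] by (simp add: \<mu>_def B_def mball)
  define Q where "Q = (\<lambda>j. (\<Omega> \<inter> ball c r \<inter> B j) - (\<Union>i\<in>{..<j}. B i))"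
  have Qm[measurable]: "Q j \<in> sets lebesgue" for j
    unfolding Q_def B_def using geo(1) by (intro sets.Diff sets.Int sets.finite_UN open_leb) auto
  have QK: "Q j \<subseteq> \<Omega> \<inter> ball c r" for j by (auto simp: Q_def)
  have QB: "Q j \<subseteq> B j" for j by (auto simp: Q_def)
  have Qdisj: "Q i \<inter> Q j = {}" if "i \<noteq> j" for i j
  proof -
    { fix i j :: nat assume "i < j"
      then have "Q i \<inter> Q j = {}" unfolding Q_def by auto }
    then show ?thesis using that by (metis Int_commute nat_neq_iff)
  qed
  have Qun: "(\<Union>j. Q j) = \<Omega> \<inter> ball c r"
  proof
    show "(\<Union>j. Q j) \<subseteq> \<Omega> \<inter> ball c r" using QK by blast
    show "\<Omega> \<inter> ball c r \<subseteq> (\<Union>j. Q j)"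
    proof
      fix x assume x: "x \<in> \<Omega> \<inter> ball c r"
      then have "x \<in> (\<Union>j. ball (g j) (d (g j) / 2))" using g2 by blast
      then have ex: "\<exists>j. x \<in> B j" unfolding B_def by blast
      define j where "j = (LEAST j. x \<in> B j)"
      have "x \<in> B j" unfolding j_def using ex by (metis LeastI)
      moreover have "x \<notin> B i" if "i < j" for i using that not_less_Least unfolding j_def by blast
      ultimately have "x \<in> Q j" using x unfolding Q_def by auto
      then show "x \<in> (\<Union>j. Q j)" by blast
    qed
  qed
  define new where "new = (\<lambda>j. g j \<notin> g ` {..<j})"
  have Qempty: "Q j = {}" if nn: "\<not> new j" for j
  proof -
    obtain i where "i < j" "g i = g j" using nn unfolding new_def by auto
    then have "B j \<subseteq> (\<Union>i\<in>{..<j}. B i)" unfolding B_def by auto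
    then show ?thesis unfolding Q_def by auto
  qed
  define lam' where "lam' = (\<lambda>j. M0 * L * \<mu> j powr (1/p))"
  have lam'pos: "lam' j > 0" for j using M0pos Lpos \<mu>pos[of j] by (simp add: lam'_def)
  define lam where "lam = (\<lambda>j. if new j then lam' j else 0)"
  define a where "a = (\<lambda>j x. indicator (Q j) x * G x / lam' j)"
  have lama: "lam j * a j x = indicator (Q j) x * G x" for j x
  proof (cases "new j")
    case True then show ?thesis using lam'pos[of j] by (simp add: lam_def a_def)
  next
    case False then show ?thesis using Qempty[of j] by (simp add: lam_def a_def)
  qed
  have Om[measurable]: "\<Omega> \<in> sets lebesgue" by (rule open_leb[OF geo(1)])
  have \<mu>B': "measure lebesgue (ball (g j) (d (g j) / 2)) = \<mu> j" for j by (simp add: \<mu>_def B_def)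
  have aj_bound: "\<bar>a j x\<bar> \<le> M0 * L / lam' j" for j x
  proof -
    have "\<bar>a j x\<bar> = indicator (Q j) x * \<bar>G x\<bar> / lam' j"
      using lam'pos[of j] by (simp add: a_def abs_mult split: split_indicator)
    also have "\<dots> \<le> 1 * (M0 * L) / lam' j"
      using lam'pos[of j] Gb[of x] by (intro divide_right_mono mult_mono) (auto split: split_indicator)
    finally show ?thesis by simp
  qed
  have aj_bound2: "M0 * L / lam' j = \<mu> j powr (-1/p)" for j
  proof -
    have "M0 * L / lam' j = 1 / \<mu> j powr (1/p)" using M0pos Lpos by (simp add: lam'_def)
    also have "\<dots> = \<mu> j powr (-1/p)" by (simp add: powr_minus_divide)
    finally show ?thesis .
  qed
  have atom: "HpMi_atom p \<Omega> (a j)" for j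
  proof -
    have i1: "d (g j) / 2 > 0" using dpos[of j] by simp
    have i2: "ball (g j) (d (g j) / 2) \<subseteq> \<Omega>"
    proof -
      have "ball (g j) (d (g j) / 2) \<subseteq> ball (g j) (d (g j))" using dpos[of j] by (intro subset_ball) simp
      then show ?thesis using dsub[of j] by (rule order_trans)
    qed
    have i3: "set_borel_measurable lebesgue \<Omega> (a j)"
      unfolding set_borel_measurable_def a_def by measurable
    have i4: "\<forall>x. x \<notin> ball (g j) (d (g j) / 2) \<longrightarrow> a j x = 0"
    proof (intro allI impI)
      fix x assume "x \<notin> ball (g j) (d (g j) / 2)"
      then have "x \<notin> Q j" using QB[of j] unfolding B_def by blast
      then show "a j x = 0" by (simp add: a_def)
    qed
    have i5: "\<exists>M. \<forall>x. \<bar>a j x\<bar> \<le> M" using aj_bound by blast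
    have i6: "AE x in lebesgue. x \<in> \<Omega> \<longrightarrow> \<bar>a j x\<bar> \<le> measure lebesgue (ball (g j) (d (g j) / 2)) powr (-1/p)"
      using aj_bound aj_bound2 by (intro AE_I2) (simp add: \<mu>B')
    have i7: "ball (g j) (2 * (d (g j) / 2)) \<subseteq> \<Omega>" using dsub[of j] by simp
    have i8: "ball (g j) (4 * (d (g j) / 2)) \<inter> frontier \<Omega> \<noteq> {}" using dfr[of j] by simp
    show ?thesis unfolding HpMi_atom_def
      apply (rule exI[where x="g j"], rule exI[where x="d (g j) / 2"])
      using i1 i2 i3 i4 i5 i6 i7 i8 by (intro conjI disjI1) assumption+
  qed
  have lamp: "\<bar>lam j\<bar> powr p = (if new j then (M0 * L) powr p * \<mu> j else 0)" for j
  proof (cases "new j")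
    case True
    have "\<bar>lam j\<bar> powr p = (M0 * L * \<mu> j powr (1/p)) powr p"
      using True lam'pos[of j] by (simp add: lam_def lam'_def)
    also have "\<dots> = (M0 * L) powr p * (\<mu> j powr (1/p)) powr p"
      using M0pos Lpos by (simp add: powr_mult)
    also have "(\<mu> j powr (1/p)) powr p = \<mu> j"
      using \<mu>pos[of j] p(1) by (simp add: powr_powr)
    finally show ?thesis using True by simp
  next
    case False then show ?thesis by (simp add: lam_def)
  qed
  have LB: "(M0 * L) powr p * \<mu>B = M0 powr p"
  proof -
    have "L powr p = \<mu>B powr (-1)" using \<mu>Bpos p(1) by (simp add: L_def powr_powr)
    then have "L powr p * \<mu>B = 1" using \<mu>Bpos by (simp add: powr_minus)
    then show ?thesis using M0pos Lpos by (simp add: powr_mult)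
  qed
  have psum: "(\<Sum>j<N. \<bar>lam j\<bar> powr p) \<le> M0 powr p * 10 ^ DIM('a)" for N
  proof -
    let ?S = "{j \<in> {..<N}. new j}"
    have img: "g ` ?S = g ` {..<N}"
    proof
      show "g ` ?S \<subseteq> g ` {..<N}" by auto
      show "g ` {..<N} \<subseteq> g ` ?S"
      proof
        fix y assume "y \<in> g ` {..<N}"
        then obtain j where j: "j < N" "y = g j" by auto
        define i where "i = (LEAST i. g i = g j)"
        have gi: "g i = g j" unfolding i_def by (rule LeastI) (rule refl)
        have ij: "i \<le> j" unfolding i_def by (rule Least_le) (rule refl)
        have "new i"
        proof (rule ccontr)
          assume "\<not> new i"
          then obtain k where "k < i" "g k = g i" unfolding new_def by auto
          then show False using gi not_less_Least[of k "\<lambda>i. g i = g j"] unfolding i_def by auto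
        qed
        then have "i \<in> ?S" using ij j by auto
        then show "y \<in> g ` ?S" using gi j by (metis image_eqI)
      qed
    qed
    have inj: "inj_on g ?S"
    proof (rule inj_onI)
      fix i j assume i: "i \<in> ?S" and j: "j \<in> ?S" and e: "g i = g j"
      show "i = j"
      proof (rule linorder_cases[of i j])
        assume "i < j" then show ?thesis using j e unfolding new_def by (metis image_eqI lessThan_iff mem_Collect_eq)
      next
        assume "j < i" then show ?thesis using i e unfolding new_def by (metis image_eqI lessThan_iff mem_Collect_eq)
      qed
    qed
    have "(\<Sum>j<N. \<bar>lam j\<bar> powr p) = (\<Sum>j<N. if new j then (M0 * L) powr p * \<mu> j else 0)"
      by (simp add: lamp)
    also have "\<dots> = (\<Sum>j\<in>?S. (M0 * L) powr p * \<mu> j)"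
      by (rule sum.inter_filter[symmetric]) simp
    also have "\<dots> = (M0 * L) powr p * (\<Sum>j\<in>?S. \<mu> j)" by (simp add: sum_distrib_left)
    also have "(\<Sum>j\<in>?S. \<mu> j) = (\<Sum>x\<in>g ` ?S. measure lebesgue (ball x (d x / 2)))"
      unfolding sum.reindex[OF inj] o_def \<mu>B' by (rule refl)
    also have "\<dots> = (\<Sum>x\<in>g ` {..<N}. measure lebesgue (ball x (d x / 2)))" by (simp only: img)
    also have "(M0 * L) powr p * \<dots> \<le> (M0 * L) powr p * (10 ^ DIM('a) * \<mu>B)"
      using g3[of N] unfolding \<mu>B_def by (intro mult_left_mono) auto
    also have "\<dots> = M0 powr p * 10 ^ DIM('a)" using LB by (simp add: algebra_simps)
    finally show ?thesis .
  qed
  have summ: "summable (\<lambda>j. \<bar>lam j\<bar> powr p)"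
    by (rule summableI_nonneg_bounded[OF _ psum]) simp
  have sumle: "(\<Sum>j. \<bar>lam j\<bar> powr p) \<le> M0 powr p * 10 ^ DIM('a)"
    by (rule suminf_le_const[OF summ psum])
  have ballm[measurable]: "ball c r \<in> sets lebesgue" by (rule ball_fin(2))
  have distr: "(\<lambda>j. lam j * (LINT x:\<Omega>|lebesgue. a j x * \<phi> x)) sums (LINT x:\<Omega>|lebesgue. f x * \<phi> x)"
    if t\<phi>: "test_function \<Omega> \<phi>" for \<phi>
  proof -
    obtain P where P: "\<forall>x. \<bar>\<phi> x\<bar> \<le> P" using test_bounded(2)[OF t\<phi>] by blast
    have \<phi>m[measurable]: "\<phi> \<in> borel_measurable lebesgue" using cont_meas[OF test_bounded(1)[OF t\<phi>]] .
    define h where "h = (\<lambda>x. indicator (\<Omega> \<inter> ball c r) x * G x * \<phi> x)"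
    have hm[measurable]: "h \<in> borel_measurable lebesgue" unfolding h_def by measurable
    have hb: "\<bar>h x\<bar> \<le> M0 * L * P" for x
    proof -
      have "\<bar>h x\<bar> = indicator (\<Omega> \<inter> ball c r) x * \<bar>G x\<bar> * \<bar>\<phi> x\<bar>"
        by (simp add: h_def abs_mult split: split_indicator)
      also have "\<dots> \<le> 1 * (M0 * L) * P"
        using Gb[of x] P by (intro mult_mono) (auto split: split_indicator)
      finally show ?thesis by simp
    qed
    have hint: "integrable lebesgue h"
      by (rule integrableI_bounded_set[where A="ball c r" and B="M0 * L * P"])
         (use hb ball_fin(1)[of c r] in \<open>auto simp: h_def less_top\<close>)
    have Qint: "integrable lebesgue (\<lambda>x. indicator (Q j) x * h x)" for j
      using integrable_mult_indicator[OF Qm hint] by simp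
    have trm: "lam j * (LINT x:\<Omega>|lebesgue. a j x * \<phi> x) = integral\<^sup>L lebesgue (\<lambda>x. indicator (Q j) x * h x)" for j
    proof -
      have "lam j * (LINT x:\<Omega>|lebesgue. a j x * \<phi> x) = integral\<^sup>L lebesgue (\<lambda>x. lam j * (indicator \<Omega> x * (a j x * \<phi> x)))"
        unfolding set_lebesgue_integral_def by simp
      also have "\<dots> = integral\<^sup>L lebesgue (\<lambda>x. indicator (Q j) x * h x)"
      proof (rule Bochner_Integration.integral_cong[OF refl])
        fix x
        have "lam j * (indicator \<Omega> x * (a j x * \<phi> x)) = indicator \<Omega> x * (lam j * a j x) * \<phi> x" by simp
        also have "\<dots> = indicator (Q j) x * h x"
          unfolding lama h_def using QK[of j] by (auto split: split_indicator)
        finally show "lam j * (indicator \<Omega> x * (a j x * \<phi> x)) = indicator (Q j) x * h x" .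
      qed
      finally show ?thesis .
    qed
    have lhs: "(LINT x:\<Omega>|lebesgue. f x * \<phi> x) = integral\<^sup>L lebesgue h"
      unfolding set_lebesgue_integral_def
    proof (rule integral_cong_AE)
      have "(\<lambda>x. indicator \<Omega> x *\<^sub>R (f x * \<phi> x)) = (\<lambda>x. F x * \<phi> x)" by (auto simp: F_def)
      then show "(\<lambda>x. indicator \<Omega> x *\<^sub>R (f x * \<phi> x)) \<in> borel_measurable lebesgue" by simp
      show "h \<in> borel_measurable lebesgue" by simp
      show "AE x in lebesgue. indicator \<Omega> x *\<^sub>R (f x * \<phi> x) = h x"
        using fb
      proof eventually_elim
        fix x assume hx: "x \<in> \<Omega> \<longrightarrow> \<bar>f x\<bar> \<le> C0 * measure lebesgue (ball c r) powr (-1/p)"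
        show "indicator \<Omega> x *\<^sub>R (f x * \<phi> x) = h x"
        proof (cases "x \<in> \<Omega>")
          case True
          then have "\<bar>F x\<bar> \<le> t" using hx by (simp add: F_def t_def L_def \<mu>B_def)
          then have "G x = f x" using True by (simp add: G_def F_def)
          then show ?thesis using True fs by (auto simp: h_def split: split_indicator)
        next
          case False then show ?thesis by (simp add: h_def)
        qed
      qed
    qed
    have dfam: "disjoint_family_on Q {..<N}" for N using Qdisj unfolding disjoint_family_on_def by blast
    have ps: "(\<Sum>j<N. integral\<^sup>L lebesgue (\<lambda>x. indicator (Q j) x * h x))
        = integral\<^sup>L lebesgue (\<lambda>x. indicator (\<Union>j\<in>{..<N}. Q j) x * h x)" for N
    proof -
      have "(\<Sum>j<N. integral\<^sup>L lebesgue (\<lambda>x. indicator (Q j) x * h x))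
          = integral\<^sup>L lebesgue (\<lambda>x. \<Sum>j<N. indicator (Q j) x * h x)"
        by (rule Bochner_Integration.integral_sum[symmetric]) (rule Qint)
      also have "\<dots> = integral\<^sup>L lebesgue (\<lambda>x. indicator (\<Union>j\<in>{..<N}. Q j) x * h x)"
        by (rule Bochner_Integration.integral_cong[OF refl])
           (simp add: indicator_UN_disjoint[OF _ dfam] sum_distrib_right)
      finally show ?thesis .
    qed
    have lim: "(\<lambda>N. integral\<^sup>L lebesgue (\<lambda>x. indicator (\<Union>j\<in>{..<N}. Q j) x * h x)) \<longlonglongrightarrow> integral\<^sup>L lebesgue h"
    proof (rule integral_dominated_convergence[where w="\<lambda>x. \<bar>h x\<bar>"])
      show "h \<in> borel_measurable lebesgue" by simp
      show "(\<lambda>x. indicator (\<Union>j\<in>{..<N}. Q j) x * h x) \<in> borel_measurable lebesgue" for N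
        by measurable
      show "integrable lebesgue (\<lambda>x. \<bar>h x\<bar>)" using hint by simp
      show "AE x in lebesgue. (\<lambda>N. indicator (\<Union>j\<in>{..<N}. Q j) x * h x) \<longlonglongrightarrow> h x"
      proof (rule AE_I2)
        fix x
        have "(\<lambda>j. indicator (Q j) x :: real) sums indicator (\<Union>j. Q j) x"
          by (rule indicator_sums) (rule Qdisj)
        then have "(\<lambda>N. \<Sum>j<N. indicator (Q j) x :: real) \<longlonglongrightarrow> indicator (\<Omega> \<inter> ball c r) x"
          unfolding sums_def Qun .
        then have "(\<lambda>N. indicator (\<Union>j\<in>{..<N}. Q j) x :: real) \<longlonglongrightarrow> indicator (\<Omega> \<inter> ball c r) x"
          by (simp add: indicator_UN_disjoint[OF _ dfam])
        then have "(\<lambda>N. indicator (\<Union>j\<in>{..<N}. Q j) x * h x) \<longlonglongrightarrow> indicator (\<Omega> \<inter> ball c r) x * h x"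
          by (rule tendsto_mult_right)
        also have "indicator (\<Omega> \<inter> ball c r) x * h x = h x" by (simp add: h_def split: split_indicator)
        finally show "(\<lambda>N. indicator (\<Union>j\<in>{..<N}. Q j) x * h x) \<longlonglongrightarrow> h x" .
      qed
      show "AE x in lebesgue. norm (indicator (\<Union>j\<in>{..<N}. Q j) x * h x) \<le> \<bar>h x\<bar>" for N
        by (intro AE_I2) (simp add: abs_mult split: split_indicator)
    qed
    have "(\<lambda>j. integral\<^sup>L lebesgue (\<lambda>x. indicator (Q j) x * h x)) sums integral\<^sup>L lebesgue h"
      unfolding sums_def ps by (rule lim)
    then show ?thesis unfolding trm lhs .
  qed
  have dec: "HpMi_decomp p \<Omega> f lam a"
    unfolding HpMi_decomp_def using atom summ distr by blast
  show ?thesis using dec sumle unfolding M0_def by blast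
qed

theorem lemma4p4:
  fixes p C0 :: real
  assumes "0 < p" and "p \<le> 1"
  shows "\<exists>C::real. \<forall>(\<Omega>::'a::euclidean_space set) c r (f::'a \<Rightarrow> real).
     open \<Omega> \<and> c \<in> \<Omega> \<and> r > 0 \<and> ball c (4*r) \<inter> frontier \<Omega> \<noteq> {} \<and>
     set_borel_measurable lebesgue \<Omega> f \<and>
     (\<forall>x\<in>\<Omega>. x \<notin> ball c r \<longrightarrow> f x = 0) \<and>
     (AE x in lebesgue. x \<in> \<Omega> \<longrightarrow> \<bar>f x\<bar> \<le> C0 * measure lebesgue (ball c r) powr (-1/p))
     \<longrightarrow> HpMi_norm p \<Omega> f \<le> ennreal C"
proof -
  define V where "V = max C0 1 powr p * 10 ^ DIM('a)"
  show ?thesis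
  proof (rule exI[of _ "V powr (1/p)"], intro allI impI)
    fix \<Omega> :: "'a set" and c r and f :: "'a \<Rightarrow> real"
    assume H: "open \<Omega> \<and> c \<in> \<Omega> \<and> r > 0 \<and> ball c (4*r) \<inter> frontier \<Omega> \<noteq> {} \<and>
     set_borel_measurable lebesgue \<Omega> f \<and>
     (\<forall>x\<in>\<Omega>. x \<notin> ball c r \<longrightarrow> f x = 0) \<and>
     (AE x in lebesgue. x \<in> \<Omega> \<longrightarrow> \<bar>f x\<bar> \<le> C0 * measure lebesgue (ball c r) powr (-1/p))"
    obtain lam a where D: "HpMi_decomp p \<Omega> f lam a" and DV: "(\<Sum>j. \<bar>lam j\<bar> powr p) \<le> V"
      using main[OF assms, of \<Omega> c r f C0] H unfolding V_def by blast
    define S where "S = {(\<Sum>j. \<bar>lam j\<bar> powr p) | lam a. HpMi_decomp p \<Omega> f lam a}"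
    have mem: "(\<Sum>j. \<bar>lam j\<bar> powr p) \<in> S" unfolding S_def using D by blast
    then have ne: "S \<noteq> {}" by blast
    have nonneg: "0 \<le> s" if sS: "s \<in> S" for s
    proof -
      obtain lam' a' where "s = (\<Sum>j. \<bar>lam' j\<bar> powr p)" "HpMi_decomp p \<Omega> f lam' a'"
        using sS unfolding S_def by blast
      then show ?thesis by (simp add: HpMi_decomp_def suminf_nonneg)
    qed
    have bdd: "bdd_below S" using nonneg by (meson bdd_belowI)
    have "Inf S \<le> V" using cInf_lower[OF mem bdd] DV by linarith
    moreover have "0 \<le> Inf S" by (rule cInf_greatest[OF ne nonneg])
    ultimately have "Inf S powr (1/p) \<le> V powr (1/p)"
      using assms(1) by (intro powr_mono2) auto
    then show "HpMi_norm p \<Omega> f \<le> ennreal (V powr (1/p))"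
      unfolding HpMi_norm_def Let_def S_def[symmetric] using ne by (simp add: ennreal_leI)
  qed
qed

end
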